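(* For $n \geq 3$, the cycle $C_n$ is diametrical (i.e. $\Gamma_b(C_n) = \mathrm{diam}(C_n)$) if and only if $n \in \{3,4,5\}$.
   Context: Let $G=(V,E)$ be a finite connected graph with distance $d(u,v)$, eccentricity $e(v)=\max_w d(v,w)$ and diameter $\mathrm{diam}(G)=\max_v e(v)$. A broadcast is a function $f: V\to\{0,\dots,\mathrm{diam}(G)\}$ with $f(v)\le e(v)$; its cost is $\sum_v f(v)$; it is dominating if every $u$ has some $v$ with $f(v)\ge 1$ and $d(u,v)\le f(v)$; a dominating broadcast is minimal if decreasing $f(v)$ for any $v$ with $f(v)>0$ destroys domination. $\Gamma_b(G)$ is the maximum cost of a minimal dominating broadcast, and $G$ is called diametrical if $\Gamma_b(G)=\mathrm{diam}(G)$. *)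

theory Defs
  imports Main
begin

text \<open>A finite graph is given by a vertex set V and a symmetric adjacency predicate E.
  Distances are lengths of shortest walks inside V.\<close>

definition adj_rel :: "'a set \<Rightarrow> ('a \<Rightarrow> 'a \<Rightarrow> bool) \<Rightarrow> ('a \<times> 'a) set" where
  "adj_rel V E = {(u, v). u \<in> V \<and> v \<in> V \<and> E u v}"

definition gdist :: "'a set \<Rightarrow> ('a \<Rightarrow> 'a \<Rightarrow> bool) \<Rightarrow> 'a \<Rightarrow> 'a \<Rightarrow> nat" where
  "gdist V E u v = (LEAST k. (u, v) \<in> adj_rel V E ^^ k)"

definition ecc :: "'a set \<Rightarrow> ('a \<Rightarrow> 'a \<Rightarrow> bool) \<Rightarrow> 'a \<Rightarrow> nat" where
  "ecc V E v = Max ((gdist V E v) ` V)"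

definition diam :: "'a set \<Rightarrow> ('a \<Rightarrow> 'a \<Rightarrow> bool) \<Rightarrow> nat" where
  "diam V E = Max ((ecc V E) ` V)"

definition is_broadcast :: "'a set \<Rightarrow> ('a \<Rightarrow> 'a \<Rightarrow> bool) \<Rightarrow> ('a \<Rightarrow> nat) \<Rightarrow> bool" where
  "is_broadcast V E f \<longleftrightarrow> (\<forall>v\<in>V. f v \<le> ecc V E v) \<and> (\<forall>v. v \<notin> V \<longrightarrow> f v = 0)"

definition bcost :: "'a set \<Rightarrow> ('a \<Rightarrow> nat) \<Rightarrow> nat" where
  "bcost V f = (\<Sum>v\<in>V. f v)"

definition dominating :: "'a set \<Rightarrow> ('a \<Rightarrow> 'a \<Rightarrow> bool) \<Rightarrow> ('a \<Rightarrow> nat) \<Rightarrow> bool" where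
  "dominating V E f \<longleftrightarrow> (\<forall>u\<in>V. \<exists>v\<in>V. f v \<ge> 1 \<and> gdist V E u v \<le> f v)"

definition minimal_dominating :: "'a set \<Rightarrow> ('a \<Rightarrow> 'a \<Rightarrow> bool) \<Rightarrow> ('a \<Rightarrow> nat) \<Rightarrow> bool" where
  "minimal_dominating V E f \<longleftrightarrow> is_broadcast V E f \<and> dominating V E f \<and>
     (\<forall>v\<in>V. f v > 0 \<longrightarrow> \<not> dominating V E (f(v := f v - 1)))"

definition upper_broadcast_number :: "'a set \<Rightarrow> ('a \<Rightarrow> 'a \<Rightarrow> bool) \<Rightarrow> nat" where
  "upper_broadcast_number V E = Max {bcost V f | f. minimal_dominating V E f}"

definition diametrical :: "'a set \<Rightarrow> ('a \<Rightarrow> 'a \<Rightarrow> bool) \<Rightarrow> bool" where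
  "diametrical V E \<longleftrightarrow> upper_broadcast_number V E = diam V E"

definition cycle_V :: "nat \<Rightarrow> nat set" where
  "cycle_V n = {0..<n}"

definition cycle_E :: "nat \<Rightarrow> nat \<Rightarrow> nat \<Rightarrow> bool" where
  "cycle_E n i j \<longleftrightarrow> j = (i + 1) mod n \<or> i = (j + 1) mod n"

end

theory Submission
  imports Defs
begin

definition cd :: "nat \<Rightarrow> nat \<Rightarrow> nat \<Rightarrow> nat" where
  "cd n i j = (if i \<le> j then min (j-i) (n-(j-i)) else min (i-j) (n-(i-j)))"

lemma adj_iff:
  assumes "i < n" "j < n"
  shows "cycle_E n i j \<longleftrightarrow> (j = i+1 \<or> (i = n-1 \<and> j = 0) \<or> i = j+1 \<or> (j = n-1 \<and> i = 0))"
proof -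
  have a: "(i+1) mod n = (if i+1 = n then 0 else i+1)" using assms by auto
  have b: "(j+1) mod n = (if j+1 = n then 0 else j+1)" using assms by auto
  show ?thesis unfolding cycle_E_def a b using assms by auto
qed

lemma cd_step:
  assumes "i < n" "l < n" "j < n" "cycle_E n l j"
  shows "cd n i j \<le> cd n i l + 1"
  using assms(4) unfolding adj_iff[OF assms(2,3)] using assms(1-3)
  by (auto simp: cd_def split: if_splits)

lemma relpow_sym:
  assumes "sym R" "(x,y) \<in> R ^^ k"
  shows "(y,x) \<in> R ^^ k"
  using assms(2)
proof (induction k arbitrary: y)
  case 0 then show ?case by simp
next
  case (Suc k)
  from Suc.prems obtain z where "(x,z) \<in> R ^^ k" "(z,y) \<in> R" by (rule relpow_Suc_E)
  then show ?case using Suc.IH assms(1) by (meson relpow_Suc_I2 symD)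
qed

lemma lower:
  assumes "(i,j) \<in> adj_rel (cycle_V n) (cycle_E n) ^^ k" "i < n"
  shows "cd n i j \<le> k \<and> j < n"
  using assms(1)
proof (induction k arbitrary: j)
  case 0 then show ?case using assms(2) by (simp add: cd_def)
next
  case (Suc k)
  from Suc.prems obtain l where l: "(i,l) \<in> adj_rel (cycle_V n) (cycle_E n) ^^ k"
    "(l,j) \<in> adj_rel (cycle_V n) (cycle_E n)" by (rule relpow_Suc_E)
  from l(2) have "l < n" "j < n" "cycle_E n l j" by (auto simp: adj_rel_def cycle_V_def)
  with Suc.IH[OF l(1)] cd_step[OF assms(2) this] show ?case by auto
qed

lemma fwd:
  assumes "i < n"
  shows "(i, (i+k) mod n) \<in> adj_rel (cycle_V n) (cycle_E n) ^^ k"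
proof (induction k)
  case 0 then show ?case using assms by simp
next
  case (Suc k)
  have "n > 0" using assms by auto
  have "((i+k) mod n, (i + Suc k) mod n) \<in> adj_rel (cycle_V n) (cycle_E n)"
    using \<open>n>0\<close> by (auto simp: adj_rel_def cycle_V_def cycle_E_def mod_Suc_eq)
  then show ?case by (rule relpow_Suc_I[OF Suc.IH])
qed

lemma sym_adj: "sym (adj_rel (cycle_V n) (cycle_E n))"
  by (auto simp: sym_def adj_rel_def cycle_E_def)

lemma upper:
  assumes "i < n" "j < n"
  shows "(i,j) \<in> adj_rel (cycle_V n) (cycle_E n) ^^ (cd n i j)"
proof -
  have g: "(a, b) \<in> adj_rel (cycle_V n) (cycle_E n) ^^ (b-a)"
       "(a, b) \<in> adj_rel (cycle_V n) (cycle_E n) ^^ (n-(b-a))"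
    if "a \<le> b" "b < n" for a b
  proof -
    show "(a, b) \<in> adj_rel (cycle_V n) (cycle_E n) ^^ (b-a)"
      using fwd[of a n "b-a"] that by simp
    have "(b, (b + (n-(b-a))) mod n) \<in> adj_rel (cycle_V n) (cycle_E n) ^^ (n-(b-a))"
      using fwd[of b n "n-(b-a)"] that by blast
    moreover have "(b + (n-(b-a))) mod n = a" using that
    proof -
      have "b + (n-(b-a)) = a + n" using that by simp
      then show ?thesis using that by simp
    qed
    ultimately show "(a, b) \<in> adj_rel (cycle_V n) (cycle_E n) ^^ (n-(b-a))"
      using relpow_sym[OF sym_adj] by metis
  qed
  show ?thesis
  proof (cases "i \<le> j")
    case True then show ?thesis using g[OF True assms(2)] by (simp add: cd_def min_def)
  next
    case False
    then have "j \<le> i" by simp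
    from g[OF this assms(1)] show ?thesis using False relpow_sym[OF sym_adj]
      by (simp add: cd_def min_def)
  qed
qed

lemma gdist_cd:
  assumes "i < n" "j < n"
  shows "gdist (cycle_V n) (cycle_E n) i j = cd n i j"
  unfolding gdist_def
  by (rule Least_equality) (use upper[OF assms] lower assms in auto)

lemmas gdist_cd' = gdist_cd[unfolded cycle_V_def]

lemma all5: "(\<forall>v<(5::nat). P v) = (P 0 \<and> P 1 \<and> P 2 \<and> P 3 \<and> P 4)"
  by (auto simp: numeral_eq_Suc less_Suc_eq)
lemma ex5: "(\<exists>v<(5::nat). P v) = (P 0 \<or> P 1 \<or> P 2 \<or> P 3 \<or> P 4)"
  by (auto simp: numeral_eq_Suc less_Suc_eq)
lemma all4: "(\<forall>v<(4::nat). P v) = (P 0 \<and> P 1 \<and> P 2 \<and> P 3)"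
  by (auto simp: numeral_eq_Suc less_Suc_eq)
lemma ex4: "(\<exists>v<(4::nat). P v) = (P 0 \<or> P 1 \<or> P 2 \<or> P 3)"
  by (auto simp: numeral_eq_Suc less_Suc_eq)

lemma brute5:
  assumes "\<forall>v<5. f v \<le> (1::nat)"
    "\<forall>v<5. f v > 0 \<longrightarrow> \<not>(\<forall>u<5. \<exists>w<5. (f(v:=f v - 1)) w \<ge> 1 \<and> cd 5 u w \<le> (f(v:= f v - 1)) w)"
  shows "f 0 + f 1 + f 2 + f 3 + f 4 \<le> 2"
proof -
  have c: "f 0 = 0 \<or> f 0 = 1" "f 1 = 0 \<or> f 1 = 1" "f 2 = 0 \<or> f 2 = 1" "f 3 = 0 \<or> f 3 = 1" "f 4 = 0 \<or> f 4 = 1"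
    using assms(1) by (auto simp: all5)
  have m: "f 0 > 0 \<longrightarrow> \<not>(\<forall>u<5. \<exists>w<5. (f(0:=f 0 - 1)) w \<ge> 1 \<and> cd 5 u w \<le> (f(0:= f 0 - 1)) w)"
    "f 1 > 0 \<longrightarrow> \<not>(\<forall>u<5. \<exists>w<5. (f(1:=f 1 - 1)) w \<ge> 1 \<and> cd 5 u w \<le> (f(1:= f 1 - 1)) w)"
    "f 2 > 0 \<longrightarrow> \<not>(\<forall>u<5. \<exists>w<5. (f(2:=f 2 - 1)) w \<ge> 1 \<and> cd 5 u w \<le> (f(2:= f 2 - 1)) w)"
    "f 3 > 0 \<longrightarrow> \<not>(\<forall>u<5. \<exists>w<5. (f(3:=f 3 - 1)) w \<ge> 1 \<and> cd 5 u w \<le> (f(3:= f 3 - 1)) w)"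
    "f 4 > 0 \<longrightarrow> \<not>(\<forall>u<5. \<exists>w<5. (f(4:=f 4 - 1)) w \<ge> 1 \<and> cd 5 u w \<le> (f(4:= f 4 - 1)) w)"
    using assms(2) by auto
  note m' = m[unfolded all5 ex5 fun_upd_apply]
  show ?thesis
    using c m' apply -
    apply (elim disjE)
    apply (simp_all add: cd_def)
    done
qed

lemma brute4:
  assumes "\<forall>v<4. f v \<le> (1::nat)"
    "\<forall>v<4. f v > 0 \<longrightarrow> \<not>(\<forall>u<4. \<exists>w<4. (f(v:=f v - 1)) w \<ge> 1 \<and> cd 4 u w \<le> (f(v:= f v - 1)) w)"
  shows "f 0 + f 1 + f 2 + f 3\<le> 2"
proof -
  have c: "f 0 = 0 \<or> f 0 = 1" "f 1 = 0 \<or> f 1 = 1" "f 2 = 0 \<or> f 2 = 1" "f 3 = 0 \<or> f 3 = 1"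
    using assms(1) by (auto simp: all4)
  have m: "f 0 > 0 \<longrightarrow> \<not>(\<forall>u<4. \<exists>w<4. (f(0:=f 0 - 1)) w \<ge> 1 \<and> cd 4 u w \<le> (f(0:= f 0 - 1)) w)"
    "f 1 > 0 \<longrightarrow> \<not>(\<forall>u<4. \<exists>w<4. (f(1:=f 1 - 1)) w \<ge> 1 \<and> cd 4 u w \<le> (f(1:= f 1 - 1)) w)"
    "f 2 > 0 \<longrightarrow> \<not>(\<forall>u<4. \<exists>w<4. (f(2:=f 2 - 1)) w \<ge> 1 \<and> cd 4 u w \<le> (f(2:= f 2 - 1)) w)"
    "f 3 > 0 \<longrightarrow> \<not>(\<forall>u<4. \<exists>w<4. (f(3:=f 3 - 1)) w \<ge> 1 \<and> cd 4 u w \<le> (f(3:= f 3 - 1)) w)"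
    using assms(2) by auto
  note m' = m[unfolded all4 ex4 fun_upd_apply]
  show ?thesis
    using c m' apply -
    apply (elim disjE)
    apply (simp_all add: cd_def)
    done
qed

lemma cd_le: "cd n i j \<le> n div 2"
  unfolding cd_def by auto

lemma ecc_cyc:
  assumes "v < n"
  shows "ecc (cycle_V n) (cycle_E n) v = n div 2"
proof -
  let ?w = "(v + n div 2) mod n"
  have w: "?w < n" using assms by auto
  have "cd n v ?w = n div 2"
  proof (cases "v + n div 2 < n")
    case True then show ?thesis by (auto simp: cd_def)
  next
    case False
    then have "?w = (v + n div 2 - n) mod n" by (simp add: le_mod_geq)
    also have "\<dots> = v + n div 2 - n" using assms by (intro mod_less) auto
    finally have e: "?w = v + n div 2 - n" .
    have "cd n v (v + n div 2 - n) = n div 2" using False assms by (simp add: cd_def)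
    then show ?thesis using e by simp
  qed
  note c = this
  have img: "gdist (cycle_V n) (cycle_E n) v ` cycle_V n = cd n v ` {0..<n}"
    unfolding cycle_V_def using assms by (intro image_cong) (auto simp: gdist_cd')
  have mem: "n div 2 \<in> cd n v ` {0..<n}"
    using w c by (intro image_eqI[where x="?w"]) auto
  have ub: "\<forall>y \<in> cd n v ` {0..<n}. y \<le> n div 2" using cd_le by blast
  show ?thesis unfolding ecc_def img
    by (rule Max_eqI) (use mem ub in auto)
qed

lemmas ecc_cyc' = ecc_cyc[unfolded cycle_V_def]

lemma diam_cyc:
  assumes "n > 0"
  shows "diam (cycle_V n) (cycle_E n) = n div 2"
proof -
  have "ecc (cycle_V n) (cycle_E n) ` cycle_V n = {n div 2}"
    using assms by (auto simp: cycle_V_def ecc_cyc' image_iff)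
  then show ?thesis unfolding diam_def by simp
qed

lemma dom_iff:
  "dominating (cycle_V n) (cycle_E n) f \<longleftrightarrow> (\<forall>u<n. \<exists>v<n. f v \<ge> 1 \<and> cd n u v \<le> f v)"
proof -
  have m: "x \<in> cycle_V n \<longleftrightarrow> x < n" for x by (simp add: cycle_V_def)
  show ?thesis unfolding dominating_def m Ball_def Bex_def
    by (metis gdist_cd)
qed

lemma bcast_iff:
  "is_broadcast (cycle_V n) (cycle_E n) f \<longleftrightarrow> (\<forall>v<n. f v \<le> n div 2) \<and> (\<forall>v. v \<ge> n \<longrightarrow> f v = 0)"
  by (auto simp: is_broadcast_def cycle_V_def ecc_cyc')

lemma finite_costs:
  "finite {bcost (cycle_V n) f | f. minimal_dominating (cycle_V n) (cycle_E n) f}"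
proof -
  have k: "bcost (cycle_V n) f \<le> n * (n div 2)" if "minimal_dominating (cycle_V n) (cycle_E n) f" for f
  proof -
    from that have "\<forall>v<n. f v \<le> n div 2" by (simp add: minimal_dominating_def bcast_iff)
    then have "sum f {0..<n} \<le> sum (\<lambda>_. n div 2) {0..<n}" by (intro sum_mono) auto
    then show ?thesis by (simp add: bcost_def cycle_V_def)
  qed
  have "{bcost (cycle_V n) f | f. minimal_dominating (cycle_V n) (cycle_E n) f} \<subseteq> {..n * (n div 2)}"
    using k by auto
  then show ?thesis by (rule finite_subset) simp
qed

lemma ub_ge:
  assumes "minimal_dominating (cycle_V n) (cycle_E n) f"
  shows "bcost (cycle_V n) f \<le> upper_broadcast_number (cycle_V n) (cycle_E n)"
  unfolding upper_broadcast_number_def using assms finite_costs by (intro Max_ge) auto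

lemma single_min:
  assumes "n \<ge> 3"
  shows "minimal_dominating (cycle_V n) (cycle_E n) (\<lambda>v. if v = 0 then n div 2 else 0)"
proof -
  have "cd n (n div 2) 0 = n div 2" by (auto simp: cd_def)
  moreover have "n div 2 < n" using assms by auto
  ultimately show ?thesis using assms
    unfolding minimal_dominating_def bcast_iff dom_iff
    by (auto simp: cd_le intro!: exI[of _ "n div 2"])
qed

lemma two_min:
  assumes "n \<ge> 6"
  defines "m \<equiv> (n - 2) div 2"
  defines "t \<equiv> n - 2*m - 1"
  shows "minimal_dominating (cycle_V n) (cycle_E n) (\<lambda>v. if v = m \<or> v = m + t then m else 0)"
    and "bcost (cycle_V n) (\<lambda>v. if v = m \<or> v = m + t then m else 0) = 2*m"
proof -
  have t: "t \<ge> 1" "t \<le> 2" "n = 2*m + t + 1" "m \<ge> 2" using assms(1) unfolding m_def t_def by auto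
  let ?f = "\<lambda>v. if v = m \<or> v = m + t then m else 0"
  have b: "is_broadcast (cycle_V n) (cycle_E n) ?f" unfolding bcast_iff using t by auto
  have cov: "cd n u m \<le> m \<or> cd n u (m+t) \<le> m" if "u < n" for u
    using that t by (auto simp: cd_def)
  have d: "dominating (cycle_V n) (cycle_E n) ?f" unfolding dom_iff
  proof (intro allI impI)
    fix u assume "u < n"
    note u = this
    show "\<exists>v<n. 1 \<le> ?f v \<and> cd n u v \<le> ?f v"
    proof (cases "cd n u m \<le> m")
      case True then show ?thesis using t by (intro exI[of _ m]) auto
    next
      case False then have "cd n u (m+t) \<le> m" using cov[OF u] by simp
      then show ?thesis using t by (intro exI[of _ "m+t"]) auto
    qed
  qed
  have m1: "\<not> dominating (cycle_V n) (cycle_E n) (?f(m := ?f m - 1))"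
    unfolding dom_iff
  proof
    assume "\<forall>u<n. \<exists>v<n. 1 \<le> (?f(m := ?f m - 1)) v \<and> cd n u v \<le> (?f(m := ?f m - 1)) v"
    moreover have "0 < n" using t by simp
    ultimately obtain v where "v < n" "1 \<le> (?f(m := ?f m - 1)) v" "cd n 0 v \<le> (?f(m := ?f m - 1)) v"
      by blast
    then show False using t by (auto simp: cd_def split: if_splits)
  qed
  have m2: "\<not> dominating (cycle_V n) (cycle_E n) (?f(m+t := ?f (m+t) - 1))"
    unfolding dom_iff
  proof
    assume "\<forall>u<n. \<exists>v<n. 1 \<le> (?f(m+t := ?f (m+t) - 1)) v \<and> cd n u v \<le> (?f(m+t := ?f (m+t) - 1)) v"
    moreover have "n - 1 < n" using t by simp
    ultimately obtain v where "v < n" "1 \<le> (?f(m+t := ?f (m+t) - 1)) v" "cd n (n-1) v \<le> (?f(m+t := ?f (m+t) - 1)) v"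
      by blast
    then show False using t by (auto simp: cd_def split: if_splits)
  qed
  show "minimal_dominating (cycle_V n) (cycle_E n) ?f"
    unfolding minimal_dominating_def using b d m1 m2 by (auto split: if_splits)
  have "bcost (cycle_V n) ?f = sum ?f {m, m+t}"
    unfolding bcost_def cycle_V_def using t by (intro sum.mono_neutral_right) auto
  then show "bcost (cycle_V n) ?f = 2*m" using t by simp
qed

lemma sum4: "sum f {0..<4::nat} = f 0 + f 1 + f 2 + (f 3::nat)"
  by (simp add: eval_nat_numeral)
lemma sum5: "sum f {0..<5::nat} = f 0 + f 1 + f 2 + f 3 + (f 4::nat)"
  by (simp add: eval_nat_numeral)

lemma small_ub:
  assumes "n \<in> {3,4,5}" "minimal_dominating (cycle_V n) (cycle_E n) f"
  shows "bcost (cycle_V n) f \<le> n div 2"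
proof -
  have bc: "\<forall>v<n. f v \<le> n div 2" "\<forall>v. v \<ge> n \<longrightarrow> f v = 0"
    using assms(2) by (auto simp: minimal_dominating_def bcast_iff)
  have dm: "\<forall>u<n. \<exists>v<n. f v \<ge> 1 \<and> cd n u v \<le> f v"
    using assms(2) by (simp add: minimal_dominating_def dom_iff)
  have mn: "\<forall>v<n. f v > 0 \<longrightarrow> \<not>(\<forall>u<n. \<exists>w<n. (f(v:=f v - 1)) w \<ge> 1 \<and> cd n u w \<le> (f(v:= f v - 1)) w)"
    using assms(2) unfolding minimal_dominating_def dom_iff by (auto simp: cycle_V_def)
  show ?thesis
  proof (cases "\<exists>v<n. f v = n div 2")
    case True
    then obtain v where v: "v < n" "f v = n div 2" by blast
    have z: "f w = 0" if "w \<noteq> v" for w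
    proof (rule ccontr)
      assume "f w \<noteq> 0"
      then have "w < n" using bc(2) by (meson not_le)
      have "\<forall>u<n. \<exists>x<n. (f(w:=f w - 1)) x \<ge> 1 \<and> cd n u x \<le> (f(w:= f w - 1)) x"
      proof (intro allI impI)
        fix u assume "u < n"
        have "n div 2 \<ge> 1" using assms(1) by auto
        then show "\<exists>x<n. (f(w:=f w - 1)) x \<ge> 1 \<and> cd n u x \<le> (f(w:= f w - 1)) x"
          using v that cd_le[of n u v] by (intro exI[of _ v]) auto
      qed
      moreover have "0 < f w" using \<open>f w \<noteq> 0\<close> by simp
      ultimately show False using mn \<open>w < n\<close> by blast
    qed
    have "bcost (cycle_V n) f = sum f {v}"
      unfolding bcost_def cycle_V_def using v z by (intro sum.mono_neutral_right) auto
    then show ?thesis using v by simp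
  next
    case False
    then have lt: "\<forall>v<n. f v < n div 2" using bc(1) using le_neq_implies_less by blast
    consider "n = 3" | "n = 4" | "n = 5" using assms(1) by auto
    then show ?thesis
    proof cases
      case 1
      then show ?thesis using lt dm by fastforce
    next
      case 2
      have a: "\<forall>v<4. f v \<le> 1" using lt 2 by auto
      have "f 0 + f 1 + f 2 + f 3 \<le> 2" by (rule brute4[OF a mn[unfolded 2]])
      then show ?thesis by (simp add: bcost_def cycle_V_def sum4 2)
    next
      case 3
      have a: "\<forall>v<5. f v \<le> 1" using lt 3 by auto
      have "f 0 + f 1 + f 2 + f 3 + f 4 \<le> 2" by (rule brute5[OF a mn[unfolded 3]])
      then show ?thesis by (simp add: bcost_def cycle_V_def sum5 3)
    qed
  qed
qed

theorem mainTheorem12: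
  fixes n :: nat
  assumes "n \<ge> 3"
  shows "diametrical (cycle_V n) (cycle_E n) \<longleftrightarrow> n \<in> {3, 4, 5}"
proof -
  have D: "diam (cycle_V n) (cycle_E n) = n div 2" using assms by (simp add: diam_cyc)
  have ge: "upper_broadcast_number (cycle_V n) (cycle_E n) \<ge> n div 2"
    using ub_ge[OF single_min[OF assms]] assms by (simp add: bcost_def cycle_V_def)
  show ?thesis
  proof
    assume dia: "diametrical (cycle_V n) (cycle_E n)"
    show "n \<in> {3,4,5}"
    proof (rule ccontr)
      assume "n \<notin> {3,4,5}"
      then have "n \<ge> 6" using assms by auto
      from ub_ge[OF two_min(1)[OF this]] two_min(2)[OF this]
      have "upper_broadcast_number (cycle_V n) (cycle_E n) \<ge> 2 * ((n-2) div 2)" by simp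
      moreover have "2 * ((n-2) div 2) > n div 2" using \<open>n \<ge> 6\<close> by presburger
      ultimately show False using dia D unfolding diametrical_def by simp
    qed
  next
    assume n: "n \<in> {3,4,5}"
    have "upper_broadcast_number (cycle_V n) (cycle_E n) \<le> n div 2"
      unfolding upper_broadcast_number_def
    proof (rule Max.boundedI[OF finite_costs])
      show "{bcost (cycle_V n) f | f. minimal_dominating (cycle_V n) (cycle_E n) f} \<noteq> {}"
        using single_min[OF assms] by blast
    next
      fix a assume "a \<in> {bcost (cycle_V n) f | f. minimal_dominating (cycle_V n) (cycle_E n) f}"
      then show "a \<le> n div 2" using small_ub[OF n] by blast
    qed
    then show "diametrical (cycle_V n) (cycle_E n)" using ge D unfolding diametrical_def by simp
  qed
qed

end
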